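(* Let $V=X\cup Y$ be a finite family of L-frames, where every L-frame in $X$ is anchored at $D$ from above and every L-frame in $Y$ is anchored at $D$ from below. Let $\mathrm{OPT}$, $\mathrm{OPT}_X$, $\mathrm{OPT}_Y$ be minimum dominating sets of the intersection graphs of $V$, $X$, $Y$ respectively. Then $|\mathrm{OPT}_X|\le|\mathrm{OPT}|$ and $|\mathrm{OPT}_Y|\le|\mathrm{OPT}|$.
   Context: Fix a line $D$ of slope $-1$. An L-frame is the union of a closed horizontal segment and a closed vertical segment sharing an endpoint (the corner). It is anchored at $D$ from above if its corner is on $D$ and its segments go right and up from the corner; anchored from below if its corner is on $D$ and its segments go left and down from the corner. The intersection graph joins two L-frames iff they intersect; a dominating set is a vertex set such that every other vertex has a neighbour in it. *)

theory Defs
  imports Complex_Main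
begin

text \<open>The fixed line D of slope -1 is the line x + y = d.\<close>

definition anchored_above :: "real \<Rightarrow> (real \<times> real) set \<Rightarrow> bool" where
  "anchored_above d F \<longleftrightarrow> (\<exists>x y a b. x + y = d \<and> a > 0 \<and> b > 0 \<and>
     F = {(x + t, y) | t. 0 \<le> t \<and> t \<le> a} \<union> {(x, y + t) | t. 0 \<le> t \<and> t \<le> b})"

definition anchored_below :: "real \<Rightarrow> (real \<times> real) set \<Rightarrow> bool" where
  "anchored_below d F \<longleftrightarrow> (\<exists>x y a b. x + y = d \<and> a > 0 \<and> b > 0 \<and>
     F = {(x - t, y) | t. 0 \<le> t \<and> t \<le> a} \<union> {(x, y - t) | t. 0 \<le> t \<and> t \<le> b})"

text \<open>Dominating set of the intersection graph of the frames indexed by S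
  (vertex u is drawn as frame u; distinct vertices adjacent iff their frames meet).\<close>

definition dominating_set :: "('v \<Rightarrow> (real \<times> real) set) \<Rightarrow> 'v set \<Rightarrow> 'v set \<Rightarrow> bool" where
  "dominating_set frame S Dom \<longleftrightarrow> Dom \<subseteq> S \<and>
     (\<forall>v\<in>S - Dom. \<exists>u\<in>Dom. u \<noteq> v \<and> frame u \<inter> frame v \<noteq> {})"

definition min_dominating_set :: "('v \<Rightarrow> (real \<times> real) set) \<Rightarrow> 'v set \<Rightarrow> 'v set \<Rightarrow> bool" where
  "min_dominating_set frame S Dom \<longleftrightarrow> dominating_set frame S Dom \<and>
     (\<forall>Dom'. dominating_set frame S Dom' \<longrightarrow> card Dom \<le> card Dom')"

end

theory Submission
  imports Defs
begin

lemma above_info: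
  assumes "anchored_above d F"
  shows "\<exists>c. c \<in> F \<and> (\<forall>p\<in>F. fst p + snd p \<ge> d \<and> (fst p + snd p = d \<longrightarrow> p = c))"
proof -
  obtain x y a b where h: "x + y = d" "a > 0" "b > 0"
    "F = {(x + t, y) | t. 0 \<le> t \<and> t \<le> a} \<union> {(x, y + t) | t. 0 \<le> t \<and> t \<le> b}"
    using assms unfolding anchored_above_def by auto
  have 1: "(x,y) \<in> F" using h(2,4) by force
  have 2: "\<forall>p\<in>F. fst p + snd p \<ge> d \<and> (fst p + snd p = d \<longrightarrow> p = (x,y))"
    using h(1,4) by auto
  show ?thesis using 1 2 by blast
qed

lemma below_info:
  assumes "anchored_below d F"
  shows "\<exists>c. c \<in> F \<and> (\<forall>p\<in>F. fst p + snd p \<le> d \<and> (fst p + snd p = d \<longrightarrow> p = c))"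
proof -
  obtain x y a b where h: "x + y = d" "a > 0" "b > 0"
    "F = {(x - t, y) | t. 0 \<le> t \<and> t \<le> a} \<union> {(x, y - t) | t. 0 \<le> t \<and> t \<le> b}"
    using assms unfolding anchored_below_def by auto
  have 1: "(x,y) \<in> F" using h(2,4) by force
  have 2: "\<forall>p\<in>F. fst p + snd p \<le> d \<and> (fst p + snd p = d \<longrightarrow> p = (x,y))"
    using h(1,4) by auto
  show ?thesis using 1 2 by blast
qed

lemma geom_gen:
  fixes d :: real
  assumes A: "\<exists>c. c \<in> F \<and> (\<forall>p\<in>F. fst p + snd p \<ge> d \<and> (fst p + snd p = d \<longrightarrow> p = c))"
    and A': "\<exists>c. c \<in> F' \<and> (\<forall>p\<in>F'. fst p + snd p \<ge> d \<and> (fst p + snd p = d \<longrightarrow> p = c))"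
    and B: "\<exists>c. c \<in> G \<and> (\<forall>p\<in>G. fst p + snd p \<le> d \<and> (fst p + snd p = d \<longrightarrow> p = c))"
    and "F \<inter> G \<noteq> {}" "F' \<inter> G \<noteq> {}"
  shows "F \<inter> F' \<noteq> {}"
proof -
  obtain c where c: "c \<in> F" "\<forall>p\<in>F. fst p + snd p \<ge> d \<and> (fst p + snd p = d \<longrightarrow> p = c)" using A by blast
  obtain c' where c': "c' \<in> F'" "\<forall>p\<in>F'. fst p + snd p \<ge> d \<and> (fst p + snd p = d \<longrightarrow> p = c')" using A' by blast
  obtain e where e: "e \<in> G" "\<forall>p\<in>G. fst p + snd p \<le> d \<and> (fst p + snd p = d \<longrightarrow> p = e)" using B by blast
  obtain p where p: "p \<in> F" "p \<in> G" using assms(4) by blast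
  obtain q where q: "q \<in> F'" "q \<in> G" using assms(5) by blast
  have pF: "fst p + snd p \<ge> d \<and> (fst p + snd p = d \<longrightarrow> p = c)" using c(2) p(1) by (rule bspec)
  have pG: "fst p + snd p \<le> d \<and> (fst p + snd p = d \<longrightarrow> p = e)" using e(2) p(2) by (rule bspec)
  have "fst p + snd p \<le> d" "fst p + snd p \<ge> d" using pF pG by simp_all
  hence "fst p + snd p = d" by linarith
  hence pc: "p = c" "p = e" using pF pG by simp_all
  have qF: "fst q + snd q \<ge> d \<and> (fst q + snd q = d \<longrightarrow> q = c')" using c'(2) q(1) by (rule bspec)
  have qG: "fst q + snd q \<le> d \<and> (fst q + snd q = d \<longrightarrow> q = e)" using e(2) q(2) by (rule bspec)
  have "fst q + snd q \<le> d" "fst q + snd q \<ge> d" using qF qG by simp_all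
  hence "fst q + snd q = d" by linarith
  hence qc: "q = c'" "q = e" using qF qG by simp_all
  have "c \<in> F \<inter> F'" using c(1) c'(1) pc qc by simp
  thus ?thesis by blast
qed

lemma geom_gen2:
  fixes d :: real
  assumes A: "\<exists>c. c \<in> F \<and> (\<forall>p\<in>F. fst p + snd p \<le> d \<and> (fst p + snd p = d \<longrightarrow> p = c))"
    and A': "\<exists>c. c \<in> F' \<and> (\<forall>p\<in>F'. fst p + snd p \<le> d \<and> (fst p + snd p = d \<longrightarrow> p = c))"
    and B: "\<exists>c. c \<in> G \<and> (\<forall>p\<in>G. fst p + snd p \<ge> d \<and> (fst p + snd p = d \<longrightarrow> p = c))"
    and "F \<inter> G \<noteq> {}" "F' \<inter> G \<noteq> {}"
  shows "F \<inter> F' \<noteq> {}"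
proof -
  obtain c where c: "c \<in> F" "\<forall>p\<in>F. fst p + snd p \<le> d \<and> (fst p + snd p = d \<longrightarrow> p = c)" using A by blast
  obtain c' where c': "c' \<in> F'" "\<forall>p\<in>F'. fst p + snd p \<le> d \<and> (fst p + snd p = d \<longrightarrow> p = c')" using A' by blast
  obtain e where e: "e \<in> G" "\<forall>p\<in>G. fst p + snd p \<ge> d \<and> (fst p + snd p = d \<longrightarrow> p = e)" using B by blast
  obtain p where p: "p \<in> F" "p \<in> G" using assms(4) by blast
  obtain q where q: "q \<in> F'" "q \<in> G" using assms(5) by blast
  have pF: "fst p + snd p \<le> d \<and> (fst p + snd p = d \<longrightarrow> p = c)" using c(2) p(1) by (rule bspec)
  have pG: "fst p + snd p \<ge> d \<and> (fst p + snd p = d \<longrightarrow> p = e)" using e(2) p(2) by (rule bspec)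
  have "fst p + snd p \<ge> d" "fst p + snd p \<le> d" using pF pG by simp_all
  hence "fst p + snd p = d" by linarith
  hence pc: "p = c" "p = e" using pF pG by simp_all
  have qF: "fst q + snd q \<le> d \<and> (fst q + snd q = d \<longrightarrow> q = c')" using c'(2) q(1) by (rule bspec)
  have qG: "fst q + snd q \<ge> d \<and> (fst q + snd q = d \<longrightarrow> q = e)" using e(2) q(2) by (rule bspec)
  have "fst q + snd q \<ge> d" "fst q + snd q \<le> d" using qF qG by simp_all
  hence "fst q + snd q = d" by linarith
  hence qc: "q = c'" "q = e" using qF qG by simp_all
  have "c \<in> F \<inter> F'" using c(1) c'(1) pc qc by simp
  thus ?thesis by blast
qed

lemma comb:
  fixes frame :: "'v \<Rightarrow> (real \<times> real) set"
  assumes fin: "finite X" "finite Y" and disj: "X \<inter> Y = {}"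
    and H: "\<And>a b y. a \<in> X \<Longrightarrow> b \<in> X \<Longrightarrow> y \<in> Y \<Longrightarrow> frame a \<inter> frame y \<noteq> {}
              \<Longrightarrow> frame b \<inter> frame y \<noteq> {} \<Longrightarrow> frame a \<inter> frame b \<noteq> {}"
    and opt: "min_dominating_set frame (X \<union> Y) OPT"
    and optx: "min_dominating_set frame X OPTX"
  shows "card OPTX \<le> card OPT"
proof -
  have dom: "dominating_set frame (X \<union> Y) OPT" using opt unfolding min_dominating_set_def by blast
  hence sub: "OPT \<subseteq> X \<union> Y" by (simp add: dominating_set_def)
  have finO: "finite OPT" using sub fin finite_subset by blast
  define f where "f u = (SOME x. x \<in> X \<and> frame x \<inter> frame u \<noteq> {})" for u
  define Z where "Z = {u \<in> OPT \<inter> Y. \<exists>x\<in>X. frame x \<inter> frame u \<noteq> {}}"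
  define D' where "D' = (OPT \<inter> X) \<union> f ` Z"
  have fZ: "\<And>u. u \<in> Z \<Longrightarrow> f u \<in> X \<and> frame (f u) \<inter> frame u \<noteq> {}"
    unfolding Z_def f_def by (rule someI_ex) auto
  have domD: "dominating_set frame X D'"
    unfolding dominating_set_def
  proof (intro conjI ballI)
    show "D' \<subseteq> X" using fZ unfolding D'_def by blast
  next
    fix v assume v: "v \<in> X - D'"
    have "v \<in> X \<union> Y - OPT" using v unfolding D'_def by blast
    then obtain u where u: "u \<in> OPT" "u \<noteq> v" "frame u \<inter> frame v \<noteq> {}"
      using dom unfolding dominating_set_def by meson
    show "\<exists>u\<in>D'. u \<noteq> v \<and> frame u \<inter> frame v \<noteq> {}"
    proof (cases "u \<in> X")
      case True hence "u \<in> D'" using u(1) unfolding D'_def by blast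
      thus ?thesis using u by blast
    next
      case False
      hence uY: "u \<in> Y" using u sub by blast
      have vu: "frame v \<inter> frame u \<noteq> {}" using u(3) by (simp add: Int_commute)
      have vX: "v \<in> X" using v by simp
      have "u \<in> Z" unfolding Z_def using u(1) uY vX vu by blast
      hence fu: "f u \<in> D'" "f u \<in> X" "frame (f u) \<inter> frame u \<noteq> {}" using fZ[of u] unfolding D'_def by auto
      have "f u \<noteq> v" using fu(1) v by auto
      moreover have "frame (f u) \<inter> frame v \<noteq> {}"
        using H[OF fu(2) vX uY fu(3) vu] by (simp add: Int_commute)
      ultimately show ?thesis using fu by blast
    qed
  qed
  have finZ: "finite Z" using finO Z_def by auto
  have c1: "card OPTX \<le> card D'" using domD optx unfolding min_dominating_set_def by blast
  have c2: "card D' \<le> card (OPT \<inter> X) + card (f ` Z)"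
    unfolding D'_def by (rule card_Un_le)
  have c3: "card (f ` Z) \<le> card Z" using finZ by (rule card_image_le)
  have c4: "card Z \<le> card (OPT \<inter> Y)" using finO Z_def by (intro card_mono) auto
  have e: "(OPT \<inter> X) \<union> (OPT \<inter> Y) = OPT" using sub by blast
  have "card ((OPT \<inter> X) \<union> (OPT \<inter> Y)) = card (OPT \<inter> X) + card (OPT \<inter> Y)"
    using finO disj by (intro card_Un_disjoint) auto
  hence c5: "card (OPT \<inter> X) + card (OPT \<inter> Y) = card OPT" by (simp only: e)
  show ?thesis using c1 c2 c3 c4 c5 by linarith
qed

theorem mainTheorem6:
  fixes d :: real and frame :: "'v \<Rightarrow> (real \<times> real) set"
    and X Y OPT OPTX OPTY :: "'v set"
  assumes "finite X" and "finite Y" and "X \<inter> Y = {}"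
    and "\<forall>u\<in>X. anchored_above d (frame u)"
    and "\<forall>u\<in>Y. anchored_below d (frame u)"
    and "min_dominating_set frame (X \<union> Y) OPT"
    and "min_dominating_set frame X OPTX"
    and "min_dominating_set frame Y OPTY"
  shows "card OPTX \<le> card OPT \<and> card OPTY \<le> card OPT"
proof -
  have H1: "frame a \<inter> frame b \<noteq> {}"
    if "a \<in> X" "b \<in> X" "y \<in> Y" "frame a \<inter> frame y \<noteq> {}" "frame b \<inter> frame y \<noteq> {}" for a b y
  proof (rule geom_gen[OF _ _ _ that(4,5)])
    show "\<exists>c. c \<in> frame a \<and> (\<forall>p\<in>frame a. fst p + snd p \<ge> d \<and> (fst p + snd p = d \<longrightarrow> p = c))"
      using above_info assms(4) that(1) by blast
    show "\<exists>c. c \<in> frame b \<and> (\<forall>p\<in>frame b. fst p + snd p \<ge> d \<and> (fst p + snd p = d \<longrightarrow> p = c))"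
      using above_info assms(4) that(2) by blast
    show "\<exists>c. c \<in> frame y \<and> (\<forall>p\<in>frame y. fst p + snd p \<le> d \<and> (fst p + snd p = d \<longrightarrow> p = c))"
      using below_info assms(5) that(3) by blast
  qed
  have H2: "frame a \<inter> frame b \<noteq> {}"
    if "a \<in> Y" "b \<in> Y" "y \<in> X" "frame a \<inter> frame y \<noteq> {}" "frame b \<inter> frame y \<noteq> {}" for a b y
  proof (rule geom_gen2[OF _ _ _ that(4,5)])
    show "\<exists>c. c \<in> frame a \<and> (\<forall>p\<in>frame a. fst p + snd p \<le> d \<and> (fst p + snd p = d \<longrightarrow> p = c))"
      using below_info assms(5) that(1) by blast
    show "\<exists>c. c \<in> frame b \<and> (\<forall>p\<in>frame b. fst p + snd p \<le> d \<and> (fst p + snd p = d \<longrightarrow> p = c))"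
      using below_info assms(5) that(2) by blast
    show "\<exists>c. c \<in> frame y \<and> (\<forall>p\<in>frame y. fst p + snd p \<ge> d \<and> (fst p + snd p = d \<longrightarrow> p = c))"
      using above_info assms(4) that(3) by blast
  qed
  have o: "min_dominating_set frame (Y \<union> X) OPT" using assms(6) by (simp add: Un_commute)
  have d2: "Y \<inter> X = {}" using assms(3) by blast
  have "card OPTX \<le> card OPT" by (rule comb[OF assms(1,2,3) _ assms(6,7)]) (rule H1; assumption)
  moreover have "card OPTY \<le> card OPT" by (rule comb[OF assms(2,1) d2 _ o assms(8)]) (rule H2; assumption)
  ultimately show ?thesis by simp
qed

end
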